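(* The class of graphs whose complements are perfectly divisible is not $\chi$-bounded; that is, there is no function $f:\mathbb{N}\to\mathbb{N}$ such that $\chi(G)\le f(\omega(G))$ for every graph $G$ whose complement $\overline{G}$ is perfectly divisible.
   Context: All graphs are finite and simple; $\chi$ is chromatic number, $\omega$ clique number, $\overline{G}$ the complement of $G$. A graph is perfect if every induced subgraph $H$ satisfies $\chi(H)=\omega(H)$. A graph $G$ is perfectly divisible if for every induced subgraph $H$ of $G$, $V(H)$ can be partitioned into $A,B$ with $H[A]$ perfect and $\omega(H[B])<\omega(H)$. *)

theory Defs
  imports Main
begin

definition sgraph :: "'a set \<Rightarrow> 'a set set \<Rightarrow> bool" where
  "sgraph V E \<longleftrightarrow> finite V \<and> (\<forall>e\<in>E. e \<subseteq> V \<and> card e = 2)"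

definition induced :: "'a set set \<Rightarrow> 'a set \<Rightarrow> 'a set set" where
  "induced E A = {e\<in>E. e \<subseteq> A}"

definition complement :: "'a set \<Rightarrow> 'a set set \<Rightarrow> 'a set set" where
  "complement V E = {e. e \<subseteq> V \<and> card e = 2 \<and> e \<notin> E}"

definition is_clique :: "'a set \<Rightarrow> 'a set set \<Rightarrow> 'a set \<Rightarrow> bool" where
  "is_clique V E K \<longleftrightarrow> K \<subseteq> V \<and> (\<forall>x\<in>K. \<forall>y\<in>K. x \<noteq> y \<longrightarrow> {x, y} \<in> E)"

definition clique_num :: "'a set \<Rightarrow> 'a set set \<Rightarrow> nat" where
  "clique_num V E = Max {card K | K. is_clique V E K}"

definition is_coloring :: "'a set \<Rightarrow> 'a set set \<Rightarrow> nat \<Rightarrow> ('a \<Rightarrow> nat) \<Rightarrow> bool" where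
  "is_coloring V E k c \<longleftrightarrow> (\<forall>v\<in>V. c v < k) \<and>
     (\<forall>x\<in>V. \<forall>y\<in>V. {x, y} \<in> E \<longrightarrow> c x \<noteq> c y)"

definition chromatic_num :: "'a set \<Rightarrow> 'a set set \<Rightarrow> nat" where
  "chromatic_num V E = (LEAST k. \<exists>c. is_coloring V E k c)"

definition perfect :: "'a set \<Rightarrow> 'a set set \<Rightarrow> bool" where
  "perfect V E \<longleftrightarrow> (\<forall>A\<subseteq>V. chromatic_num A (induced E A) = clique_num A (induced E A))"

definition perfectly_divisible :: "'a set \<Rightarrow> 'a set set \<Rightarrow> bool" where
  "perfectly_divisible V E \<longleftrightarrow>
     (\<forall>H\<subseteq>V. H \<noteq> {} \<longrightarrow>
        (\<exists>A B. A \<union> B = H \<and> A \<inter> B = {} \<and> perfect A (induced E A) \<and>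
               clique_num B (induced E B) < clique_num H (induced E H)))"

end

theory Submission
  imports Defs "HOL-Library.Nat_Bijection"
begin

lemma clique_set_fin: "finite V \<Longrightarrow> finite {card K | K. is_clique V E K}"
proof -
  assume "finite V"
  have "{card K | K. is_clique V E K} \<subseteq> card ` Pow V" by (auto simp: is_clique_def)
  thus ?thesis using \<open>finite V\<close> finite_subset by blast
qed

lemma clique_set_ne: "{card K | K. is_clique V E K} \<noteq> {}"
proof -
  have "is_clique V E {}" by (simp add: is_clique_def)
  thus ?thesis by blast
qed

lemma clique_le: "finite V \<Longrightarrow> is_clique V E K \<Longrightarrow> card K \<le> clique_num V E"
  unfolding clique_num_def using clique_set_fin by (intro Max_ge) auto

lemma clique_ex: "finite V \<Longrightarrow> \<exists>K. is_clique V E K \<and> card K = clique_num V E"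
proof -
  assume f: "finite V"
  have "clique_num V E \<in> {card K | K. is_clique V E K}"
    unfolding clique_num_def using clique_set_fin[OF f] clique_set_ne by (rule Max_in)
  thus ?thesis by auto
qed

lemma clique_num_le: "finite V \<Longrightarrow> (\<And>K. is_clique V E K \<Longrightarrow> card K \<le> m) \<Longrightarrow> clique_num V E \<le> m"
  using clique_ex by metis

lemma col_exists:
  assumes "finite V" "\<And>x. {x} \<notin> E"
  shows "\<exists>k c. is_coloring V E k c"
proof -
  obtain h where h: "bij_betw h V {0..<card V}" using ex_bij_betw_finite_nat[OF assms(1)] by blast
  have "is_coloring V E (card V) h"
    unfolding is_coloring_def
  proof (intro conjI ballI impI)
    fix v assume "v \<in> V" thus "h v < card V" using h bij_betwE by fastforce
  next
    fix x y assume "x \<in> V" "y \<in> V" "{x, y} \<in> E"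
    then have "x \<noteq> y" using assms(2) by auto
    thus "h x \<noteq> h y" using h \<open>x \<in> V\<close> \<open>y \<in> V\<close> by (metis bij_betw_iff_bijections)
  qed
  thus ?thesis by blast
qed

lemma chi_le: "is_coloring V E k c \<Longrightarrow> chromatic_num V E \<le> k"
  unfolding chromatic_num_def by (rule Least_le) blast

lemma chi_col: "\<exists>k c. is_coloring V E k c \<Longrightarrow> \<exists>c. is_coloring V E (chromatic_num V E) c"
  unfolding chromatic_num_def by (rule LeastI_ex) blast

lemma clique_le_col:
  assumes "is_clique V E K" "is_coloring V E k c" "finite K"
  shows "card K \<le> k"
proof -
  have "inj_on c K" using assms(1,2) unfolding inj_on_def is_clique_def is_coloring_def by blast
  moreover have "c ` K \<subseteq> {..<k}" using assms(1,2) unfolding is_clique_def is_coloring_def by auto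
  ultimately show ?thesis by (metis card_image card_lessThan card_mono finite_lessThan)
qed

lemma omega_le_chi:
  assumes "finite V" "\<And>x. {x} \<notin> E"
  shows "clique_num V E \<le> chromatic_num V E"
proof -
  obtain K where K: "is_clique V E K" "card K = clique_num V E" using clique_ex assms(1) by blast
  obtain c where c: "is_coloring V E (chromatic_num V E) c" using chi_col col_exists[OF assms] by blast
  have "finite K" using K(1) assms(1) finite_subset unfolding is_clique_def by blast
  thus ?thesis using clique_le_col[OF K(1) c] K(2) by simp
qed

lemma induced_induced: "A' \<subseteq> A \<Longrightarrow> induced (induced E A) A' = induced E A'"
  unfolding induced_def by auto

lemma compl_iff: "{x, y} \<in> complement V E \<longleftrightarrow> x \<in> V \<and> y \<in> V \<and> x \<noteq> y \<and> {x, y} \<notin> E"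
  unfolding complement_def by (auto simp: card_2_iff)

lemma compl_single: "{x} \<notin> induced (complement V E) A"
  unfolding complement_def induced_def by auto

lemma induced_iff: "e \<in> induced E A \<longleftrightarrow> e \<in> E \<and> e \<subseteq> A"
  unfolding induced_def by auto

lemma tf_pd:
  assumes sg: "sgraph V E"
    and tf: "\<And>x y z. {x, y} \<in> E \<Longrightarrow> {y, z} \<in> E \<Longrightarrow> {x, z} \<in> E \<Longrightarrow> False"
  shows "perfectly_divisible V (complement V E)"
  unfolding perfectly_divisible_def
proof (intro allI impI)
  let ?C = "complement V E"
  have finV: "finite V" using sg by (simp add: sgraph_def)
  fix H assume HV: "H \<subseteq> V" and Hne: "H \<noteq> {}"
  obtain v where vH: "v \<in> H" using Hne by blast
  define A where "A = {v} \<union> {u\<in>H. {u, v} \<in> E}"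
  define B where "B = H - A"
  have AH: "A \<subseteq> H" using vH by (auto simp: A_def)
  have "A \<union> B = H" "A \<inter> B = {}" using AH by (auto simp: B_def)
  moreover have "perfect A (induced ?C A)"
    unfolding perfect_def
  proof (intro allI impI)
    fix A' assume A'A: "A' \<subseteq> A"
    have ii: "induced (induced ?C A) A' = induced ?C A'" by (rule induced_induced[OF A'A])
    have "A' \<subseteq> V" using A'A AH HV by blast
    hence finA': "finite A'" using finV by (rule finite_subset)
    have le1: "clique_num A' (induced ?C A') \<le> chromatic_num A' (induced ?C A')"
      by (rule omega_le_chi[OF finA' compl_single])
    have le2: "chromatic_num A' (induced ?C A') \<le> clique_num A' (induced ?C A')"
    proof (cases "A' = {}")
      case True
      have "is_coloring A' (induced ?C A') 0 (\<lambda>_. 0)" using True by (simp add: is_coloring_def)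
      thus ?thesis using chi_le by fastforce
    next
      case False
      define W where "W = A' - {v}"
      define m where "m = card W"
      have finW: "finite W" using finA' by (simp add: W_def)
      obtain h where h: "bij_betw h W {0..<m}" using ex_bij_betw_finite_nat[OF finW] m_def by blast
      define c where "c = (\<lambda>u. if u = v then 0 else h u)"
      have col: "is_coloring A' (induced ?C A') (max 1 m) c"
        unfolding is_coloring_def
      proof (intro conjI ballI impI)
        fix u assume "u \<in> A'"
        show "c u < max 1 m"
        proof (cases "u = v")
          case True thus ?thesis by (simp add: c_def)
        next
          case False
          hence "u \<in> W" using \<open>u \<in> A'\<close> by (simp add: W_def)
          hence "h u < m" using h bij_betwE by fastforce
          thus ?thesis using False by (simp add: c_def)
        qed
      next
        fix x y assume xA: "x \<in> A'" and yA: "y \<in> A'" and e: "{x, y} \<in> induced ?C A'"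
        hence eC: "{x, y} \<in> ?C" by (simp add: induced_iff)
        hence xy: "x \<noteq> y" "{x, y} \<notin> E" by (simp_all add: compl_iff)
        have "x \<noteq> v"
        proof
          assume "x = v"
          hence "y \<in> A - {v}" using yA A'A xy by auto
          hence "{y, v} \<in> E" by (auto simp: A_def)
          thus False using xy \<open>x = v\<close> by (simp add: insert_commute)
        qed
        moreover have "y \<noteq> v"
        proof
          assume "y = v"
          hence "x \<in> A - {v}" using xA A'A xy by auto
          hence "{x, v} \<in> E" by (auto simp: A_def)
          thus False using xy \<open>y = v\<close> by simp
        qed
        ultimately have "x \<in> W" "y \<in> W" using xA yA by (auto simp: W_def)
        hence "h x \<noteq> h y" using h xy(1) by (metis bij_betw_iff_bijections)
        thus "c x \<noteq> c y" using \<open>x \<noteq> v\<close> \<open>y \<noteq> v\<close> by (simp add: c_def)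
      qed
      have Wcl: "is_clique A' (induced ?C A') W"
        unfolding is_clique_def
      proof (intro conjI ballI impI)
        show "W \<subseteq> A'" by (auto simp: W_def)
        fix x y assume xW: "x \<in> W" and yW: "y \<in> W" and xy: "x \<noteq> y"
        have "{x, v} \<in> E" "{y, v} \<in> E" using xW yW A'A by (auto simp: W_def A_def)
        hence "{x, y} \<notin> E" using tf[of x y v] by blast
        moreover have "x \<in> V" "y \<in> V" using xW yW A'A AH HV by (auto simp: W_def)
        ultimately have "{x, y} \<in> ?C" using xy by (simp add: compl_iff)
        thus "{x, y} \<in> induced ?C A'" using xW yW by (auto simp: induced_iff W_def)
      qed
      obtain w where wA: "w \<in> A'" using False by blast
      have "is_clique A' (induced ?C A') {w}" using wA by (simp add: is_clique_def)
      hence "1 \<le> clique_num A' (induced ?C A')" using clique_le[OF finA'] by fastforce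
      moreover have "m \<le> clique_num A' (induced ?C A')" using clique_le[OF finA' Wcl] m_def by simp
      ultimately have "max 1 m \<le> clique_num A' (induced ?C A')" by simp
      thus ?thesis using chi_le[OF col] by linarith
    qed
    show "chromatic_num A' (induced (induced ?C A) A') = clique_num A' (induced (induced ?C A) A')"
      using le1 le2 ii by simp
  qed
  moreover have "clique_num B (induced ?C B) < clique_num H (induced ?C H)"
  proof -
    have finH: "finite H" using HV finV by (rule finite_subset)
    have finB: "finite B" using finH by (simp add: B_def)
    obtain K where K: "is_clique B (induced ?C B) K" "card K = clique_num B (induced ?C B)"
      using clique_ex[OF finB] by blast
    have KB: "K \<subseteq> B" using K(1) by (simp add: is_clique_def)
    have vK: "v \<notin> K" using KB by (auto simp: B_def A_def)
    have finK: "finite K" using KB finB by (rule finite_subset)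
    have "is_clique H (induced ?C H) (insert v K)"
      unfolding is_clique_def
    proof (intro conjI ballI impI)
      show "insert v K \<subseteq> H" using vH KB by (auto simp: B_def)
      fix x y assume x: "x \<in> insert v K" and y: "y \<in> insert v K" and xy: "x \<noteq> y"
      show "{x, y} \<in> induced ?C H"
      proof (cases "x = v")
        case True
        hence yB: "y \<in> B" using y xy KB by auto
        hence "y \<in> H" "{y, v} \<notin> E" "y \<noteq> v" by (auto simp: B_def A_def)
        hence "{y, v} \<in> ?C" using HV vH by (auto simp add: compl_iff)
        thus ?thesis using True \<open>y \<in> H\<close> vH by (auto simp: induced_iff insert_commute)
      next
        case xv: False
        show ?thesis
        proof (cases "y = v")
          case True
          hence xB: "x \<in> B" using x xy KB by auto
          hence "x \<in> H" "{x, v} \<notin> E" "x \<noteq> v" by (auto simp: B_def A_def)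
          hence "{x, v} \<in> ?C" using HV vH by (auto simp add: compl_iff)
          thus ?thesis using True \<open>x \<in> H\<close> vH by (auto simp: induced_iff)
        next
          case False
          hence "x \<in> K" "y \<in> K" using x y xv by auto
          hence "{x, y} \<in> induced ?C B" using K(1) xy by (simp add: is_clique_def)
          thus ?thesis by (auto simp: induced_iff B_def)
        qed
      qed
    qed
    hence "card (insert v K) \<le> clique_num H (induced ?C H)" using clique_le[OF finH] by blast
    thus ?thesis using vK finK K(2) by simp
  qed
  ultimately show "\<exists>A B. A \<union> B = H \<and> A \<inter> B = {} \<and> perfect A (induced ?C A) \<and>
               clique_num B (induced ?C B) < clique_num H (induced ?C H)" by blast
qed

definition sa :: "nat \<Rightarrow> nat" where "sa x = fst (prod_decode x)"
definition sb :: "nat \<Rightarrow> nat" where "sb x = snd (prod_decode x)"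
definition SV :: "nat \<Rightarrow> nat set" where "SV n = {x. sa x < sb x \<and> sb x < n}"
definition SE :: "nat \<Rightarrow> nat set set" where
  "SE n = {{x, y} | x y. x \<in> SV n \<and> y \<in> SV n \<and> sb x = sa y}"

lemma sa_pe[simp]: "sa (prod_encode (i, j)) = i" by (simp add: sa_def)
lemma sb_pe[simp]: "sb (prod_encode (i, j)) = j" by (simp add: sb_def)

lemma SE_iff: "{x, y} \<in> SE n \<longleftrightarrow> x \<in> SV n \<and> y \<in> SV n \<and> (sb x = sa y \<or> sb y = sa x)"
  unfolding SE_def by (auto simp: doubleton_eq_iff)

lemma SE_mem: "e \<in> SE n \<Longrightarrow> \<exists>x y. e = {x, y} \<and> x \<in> SV n \<and> y \<in> SV n \<and> sb x = sa y"
  unfolding SE_def by blast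

lemma SV_fin: "finite (SV n)"
proof -
  have "SV n \<subseteq> prod_encode ` ({..<n} \<times> {..<n})"
  proof
    fix x assume "x \<in> SV n"
    hence "sa x < n" "sb x < n" by (auto simp: SV_def)
    moreover have "x = prod_encode (sa x, sb x)" by (simp add: sa_def sb_def prod_decode_inverse)
    ultimately show "x \<in> prod_encode ` ({..<n} \<times> {..<n})" by blast
  qed
  thus ?thesis by (rule finite_subset) simp
qed

lemma S_sgraph: "sgraph (SV n) (SE n)"
  unfolding sgraph_def
proof (rule conjI[OF SV_fin], rule ballI)
  fix e assume "e \<in> SE n"
  then obtain x y where e: "e = {x, y}" "x \<in> SV n" "y \<in> SV n" "sb x = sa y" using SE_mem by blast
  have "x \<noteq> y" using e by (auto simp: SV_def)
  thus "e \<subseteq> SV n \<and> card e = 2" using e by auto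
qed

lemma S_single: "{x} \<notin> SE n"
  using SE_iff[of x x n] by (auto simp: SV_def)

lemma S_tf: "{x, y} \<in> SE n \<Longrightarrow> {y, z} \<in> SE n \<Longrightarrow> {x, z} \<in> SE n \<Longrightarrow> False"
  unfolding SE_iff SV_def by auto

lemma card3: "finite K \<Longrightarrow> 3 \<le> card K \<Longrightarrow> \<exists>x y z. x \<in> K \<and> y \<in> K \<and> z \<in> K \<and> x \<noteq> y \<and> y \<noteq> z \<and> x \<noteq> z"
proof -
  assume f: "finite K" and c: "3 \<le> card K"
  have "K \<noteq> {}" using c by auto
  then obtain x where x: "x \<in> K" by blast
  have c1: "2 \<le> card (K - {x})" using c x f by simp
  have "K - {x} \<noteq> {}" using c1 by (cases "K - {x} = {}") simp_all
  then obtain y where y: "y \<in> K - {x}" by blast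
  have "1 \<le> card (K - {x} - {y})" using c1 y f by simp
  hence "K - {x} - {y} \<noteq> {}" by (cases "K - {x} - {y} = {}") simp_all
  then obtain z where z: "z \<in> K - {x} - {y}" by blast
  show ?thesis using x y z by blast
qed

lemma S_omega: "clique_num (SV n) (SE n) \<le> 2"
proof (rule clique_num_le[OF SV_fin])
  fix K assume K: "is_clique (SV n) (SE n) K"
  have f: "finite K" using K SV_fin finite_subset unfolding is_clique_def by metis
  show "card K \<le> 2"
  proof (rule ccontr)
    assume "\<not> card K \<le> 2"
    hence "3 \<le> card K" by simp
    then obtain x y z where "x \<in> K" "y \<in> K" "z \<in> K" "x \<noteq> y" "y \<noteq> z" "x \<noteq> z"
      using card3[OF f] by blast
    hence "{x, y} \<in> SE n" "{y, z} \<in> SE n" "{x, z} \<in> SE n" using K unfolding is_clique_def by auto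
    thus False by (rule S_tf)
  qed
qed

lemma S_chi:
  assumes c: "is_coloring (SV n) (SE n) k c"
  shows "n \<le> 2 ^ k"
proof -
  define S where "S i = {c (prod_encode (i, j)) | j. i < j \<and> j < n}" for i
  have key: "S i \<noteq> S i'" if "i < i'" "i' < n" for i i'
  proof
    assume eq: "S i = S i'"
    have "c (prod_encode (i, i')) \<in> S i" using that by (auto simp: S_def)
    hence "c (prod_encode (i, i')) \<in> S i'" using eq by simp
    then obtain j where j: "i' < j" "j < n" "c (prod_encode (i', j)) = c (prod_encode (i, i'))"
      by (auto simp: S_def)
    have v1: "prod_encode (i, i') \<in> SV n" using that by (simp add: SV_def)
    have v2: "prod_encode (i', j) \<in> SV n" using j by (simp add: SV_def)
    have "{prod_encode (i, i'), prod_encode (i', j)} \<in> SE n" using v1 v2 by (simp add: SE_iff)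
    hence "c (prod_encode (i, i')) \<noteq> c (prod_encode (i', j))"
      using c v1 v2 unfolding is_coloring_def by blast
    thus False using j by simp
  qed
  have inj: "inj_on S {..<n}"
  proof (rule inj_onI)
    fix i i' assume "i \<in> {..<n}" "i' \<in> {..<n}" "S i = S i'"
    thus "i = i'" using key by (metis lessThan_iff linorder_neqE_nat)
  qed
  have sub: "S ` {..<n} \<subseteq> Pow {..<k}"
  proof
    fix X assume "X \<in> S ` {..<n}"
    then obtain i where "X = S i" by blast
    moreover have "S i \<subseteq> {..<k}"
    proof
      fix a assume "a \<in> S i"
      then obtain j where "i < j" "j < n" "a = c (prod_encode (i, j))" by (auto simp: S_def)
      moreover have "prod_encode (i, j) \<in> SV n" using calculation by (simp add: SV_def)
      ultimately show "a \<in> {..<k}" using c unfolding is_coloring_def by auto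
    qed
    ultimately show "X \<in> Pow {..<k}" by simp
  qed
  have "n = card (S ` {..<n})" using inj by (simp add: card_image)
  also have "\<dots> \<le> card (Pow {..<k})" using sub by (intro card_mono) auto
  also have "\<dots> = 2 ^ k" by (simp add: card_Pow)
  finally show ?thesis .
qed

theorem mainTheorem20:
  shows "\<not> (\<exists>f :: nat \<Rightarrow> nat. \<forall>(V :: nat set) E.
            sgraph V E \<and> perfectly_divisible V (complement V E) \<longrightarrow>
            chromatic_num V E \<le> f (clique_num V E))"
proof
  assume "\<exists>f :: nat \<Rightarrow> nat. \<forall>(V :: nat set) E.
            sgraph V E \<and> perfectly_divisible V (complement V E) \<longrightarrow>
            chromatic_num V E \<le> f (clique_num V E)"
  then obtain f :: "nat \<Rightarrow> nat" where f: "\<And>(V :: nat set) E.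
            sgraph V E \<Longrightarrow> perfectly_divisible V (complement V E) \<Longrightarrow>
            chromatic_num V E \<le> f (clique_num V E)" by blast
  define M where "M = f 0 + f 1 + f 2"
  define n :: nat where "n = 2 ^ M + 1"
  have pd: "perfectly_divisible (SV n) (complement (SV n) (SE n))"
    by (rule tf_pd[OF S_sgraph]) (rule S_tf)
  have le: "chromatic_num (SV n) (SE n) \<le> f (clique_num (SV n) (SE n))"
    by (rule f[OF S_sgraph pd])
  have om: "clique_num (SV n) (SE n) \<le> 2" by (rule S_omega)
  have "f (clique_num (SV n) (SE n)) \<le> M"
  proof -
    have "clique_num (SV n) (SE n) = 0 \<or> clique_num (SV n) (SE n) = 1 \<or> clique_num (SV n) (SE n) = 2"
      using om by linarith
    thus ?thesis unfolding M_def by auto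
  qed
  hence chiM: "chromatic_num (SV n) (SE n) \<le> M" using le by linarith
  obtain c where "is_coloring (SV n) (SE n) (chromatic_num (SV n) (SE n)) c"
    using chi_col col_exists[OF SV_fin S_single] by blast
  hence "n \<le> 2 ^ chromatic_num (SV n) (SE n)" by (rule S_chi)
  also have "\<dots> \<le> 2 ^ M" using chiM by (simp add: power_increasing)
  finally show False by (simp add: n_def)
qed

end
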